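(* Let $G$ be a cyclic group of order $p^a$, where $p$ is an odd prime and $a \geq 1$. Then the power graph $\mathscr{G}(G)$ is overfull.
   Context: For a finite group $G$, the power graph $\mathscr{G}(G)$ is the simple graph with vertex set the elements of $G$, in which two distinct elements $a,b$ are adjacent if and only if one is a power of the other. For a finite simple graph $\Gamma$ on $n$ vertices with maximum vertex degree $\Delta(\Gamma)$, $\Gamma$ is called overfull if $|E(\Gamma)| / \lfloor n/2 \rfloor > \Delta(\Gamma)$. *)

theory Defs
  imports "HOL-Algebra.Elementary_Groups" "HOL-Computational_Algebra.Primes" Complex_Main
begin

text \<open>A finite simple graph is given by a vertex set V and a symmetric irreflexive
  adjacency relation adj on V.\<close>

definition graph_edges :: "'a set \<Rightarrow> ('a \<Rightarrow> 'a \<Rightarrow> bool) \<Rightarrow> 'a set set" where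
  "graph_edges V adj = {{u, v} | u v. u \<in> V \<and> v \<in> V \<and> adj u v}"

definition graph_degree :: "'a set \<Rightarrow> ('a \<Rightarrow> 'a \<Rightarrow> bool) \<Rightarrow> 'a \<Rightarrow> nat" where
  "graph_degree V adj v = card {u \<in> V. adj v u}"

definition graph_max_degree :: "'a set \<Rightarrow> ('a \<Rightarrow> 'a \<Rightarrow> bool) \<Rightarrow> nat" where
  "graph_max_degree V adj = Max (graph_degree V adj ` V)"

definition overfull :: "'a set \<Rightarrow> ('a \<Rightarrow> 'a \<Rightarrow> bool) \<Rightarrow> bool" where
  "overfull V adj \<longleftrightarrow>
     real (card (graph_edges V adj)) / real (card V div 2) > real (graph_max_degree V adj)"

definition power_adj :: "('a, 'b) monoid_scheme \<Rightarrow> 'a \<Rightarrow> 'a \<Rightarrow> bool" where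
  "power_adj G a b \<longleftrightarrow> a \<noteq> b \<and> ((\<exists>n::nat. a = b [^]\<^bsub>G\<^esub> n) \<or> (\<exists>n::nat. b = a [^]\<^bsub>G\<^esub> n))"

end

theory Submission
  imports Defs "HOL-Algebra.Multiplicative_Group"
begin

lemma int_to_nat_pow:
  fixes G :: "('a, 'b) monoid_scheme" (structure)
  assumes "group G" "finite (carrier G)" "g \<in> carrier G"
  shows "\<exists>m::nat. g [^]\<^bsub>G\<^esub> (k::int) = g [^]\<^bsub>G\<^esub> m"
proof -
  interpret group G by fact
  define n where "n = order G"
  have npos: "n > 0" using assms(2) n_def order_gt_0_iff_finite by blast
  define q where "q = k div int n"
  define r where "r = k mod int n"
  have k: "k = int n * q + r" using q_def r_def by simp
  have r0: "r \<ge> 0" using npos r_def by simp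
  have "g [^] k = (g [^] (int n)) [^] q \<otimes> g [^] r"
    using k assms(3) by (simp add: int_pow_mult int_pow_pow)
  also have "g [^] (int n) = \<one>" using pow_order_eq_1[OF assms(3)] n_def by (simp add: int_pow_int)
  finally have "g [^] k = g [^] r" using assms(3) by simp
  also have "\<dots> = g [^] (nat r)" using r0 by (metis int_nat_eq int_pow_int)
  finally show ?thesis by blast
qed

lemma pow_of_pow:
  fixes G :: "('a, 'b) monoid_scheme" (structure)
  assumes "group G" "finite (carrier G)" "g \<in> carrier G"
    and "order G = n" and "i \<noteq> 0" and "gcd i n dvd j"
  shows "\<exists>m::nat. g [^]\<^bsub>G\<^esub> (j::nat) = (g [^]\<^bsub>G\<^esub> (i::nat)) [^]\<^bsub>G\<^esub> m"
proof -
  interpret group G by fact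
  obtain x y where xy: "i * x = n * y + gcd i n" using bezout_nat[OF assms(5)] by blast
  obtain t where t: "j = gcd i n * t" using assms(6) by blast
  have e: "i * (x * t) = n * (y * t) + j" using xy t by (metis add_mult_distrib mult.assoc)
  have "(g [^] i) [^] (x * t) = g [^] (i * (x * t))" using assms(3) by (simp add: nat_pow_pow)
  also have "\<dots> = (g [^] n) [^] (y*t) \<otimes> g [^] j" using e assms(3) by (simp add: nat_pow_mult nat_pow_pow)
  also have "g [^] n = \<one>" using pow_order_eq_1[OF assms(3)] assms(4) by simp
  finally have "(g [^] i) [^] (x * t) = g [^] j" using assms(3) by simp
  then show ?thesis by (intro exI[of _ "x*t"]) simp
qed

lemma complete_adj:
  fixes G :: "('a, 'b) monoid_scheme" (structure)
  assumes "group G" "cyclic_group G" "finite (carrier G)"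
    and "prime p" and "card (carrier G) = p ^ a"
    and "u \<in> carrier G" "v \<in> carrier G" "u \<noteq> v"
  shows "power_adj G u v"
proof -
  interpret group G by fact
  obtain g where g: "g \<in> carrier G" "carrier G = range (\<lambda>n::int. g [^] n)"
    using assms(2) cyclic_group by blast
  define n where "n = order G"
  have n: "n = p ^ a" unfolding n_def order_def using assms(5) by simp
  obtain ki :: int where "u = g [^] ki" using assms(6) g by auto
  then obtain i :: nat where i: "u = g [^] i"
    using int_to_nat_pow[OF assms(1,3) g(1), of ki] by auto
  obtain kj :: int where "v = g [^] kj" using assms(7) g by auto
  then obtain j :: nat where j: "v = g [^] j"
    using int_to_nat_pow[OF assms(1,3) g(1), of kj] by auto
  have gi: "\<exists>k\<le>a. gcd i n = p ^ k"
  proof -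
    have "gcd i n dvd p ^ a" using n by simp
    then show ?thesis using divides_primepow_nat[OF assms(4)] by blast
  qed
  have gj: "\<exists>k\<le>a. gcd j n = p ^ k"
  proof -
    have "gcd j n dvd p ^ a" using n by simp
    then show ?thesis using divides_primepow_nat[OF assms(4)] by blast
  qed
  have cmp: "gcd i n dvd j \<or> gcd j n dvd i"
  proof -
    obtain k1 k2 where A: "gcd i n = p ^ k1" "gcd j n = p ^ k2" using gi gj by blast
    have "p ^ k1 dvd p ^ k2 \<or> p ^ k2 dvd p ^ k1"
    proof (cases "k1 \<le> k2")
      case True then show ?thesis using le_imp_power_dvd by blast
    next
      case False then have "k2 \<le> k1" by simp
      then show ?thesis using le_imp_power_dvd by blast
    qed
    then have "gcd i n dvd gcd j n \<or> gcd j n dvd gcd i n" using A by simp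
    then show ?thesis
    proof
      assume "gcd i n dvd gcd j n"
      then have "gcd i n dvd j" using dvd_trans[OF _ gcd_dvd1] by blast
      then show ?thesis by blast
    next
      assume "gcd j n dvd gcd i n"
      then have "gcd j n dvd i" using dvd_trans[OF _ gcd_dvd1] by blast
      then show ?thesis by blast
    qed
  qed
  have "(\<exists>m::nat. u = v [^] m) \<or> (\<exists>m::nat. v = u [^] m)"
  proof (cases "i = 0")
    case True then have "u = v [^] (0::nat)" using i by simp
    then show ?thesis by blast
  next
    case inz: False
    show ?thesis
    proof (cases "j = 0")
      case True then have "v = u [^] (0::nat)" using j by simp
      then show ?thesis by blast
    next
      case False
      from cmp show ?thesis
      proof
        assume "gcd i n dvd j"
        then have "\<exists>m::nat. v = u [^] m"
          using pow_of_pow[OF assms(1,3) g(1) n_def[symmetric] inz, of j] i j by simp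
        then show ?thesis by blast
      next
        assume "gcd j n dvd i"
        then have "\<exists>m::nat. u = v [^] m"
          using pow_of_pow[OF assms(1,3) g(1) n_def[symmetric] False, of i] i j by simp
        then show ?thesis by blast
      qed
    qed
  qed
  with assms(8) show ?thesis unfolding power_adj_def by (intro conjI)
qed

lemma p3_lem: "prime (p::nat) \<Longrightarrow> odd p \<Longrightarrow> p \<ge> 3"
  using prime_ge_2_nat[of p] by (cases "p = 2") auto
lemma md_lem: "finite V \<Longrightarrow> V \<noteq> {} \<Longrightarrow> (\<And>v. v \<in> V \<Longrightarrow> f v = (c::nat)) \<Longrightarrow> Max (f ` V) = c"
proof -
  assume "finite V" "V \<noteq> {}" "\<And>v. v \<in> V \<Longrightarrow> f v = (c::nat)"
  then have "f ` V = {c}" by auto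
  then show ?thesis by simp
qed
lemma ed_lem: "(\<And>u v. u \<in> V \<Longrightarrow> v \<in> V \<Longrightarrow> adj u v \<longleftrightarrow> u \<noteq> v) \<Longrightarrow> graph_edges V adj = {B. B \<subseteq> V \<and> card B = 2}"
  unfolding graph_edges_def card_2_iff by blast
lemma fin_lem: "n = 2*m+1 \<Longrightarrow> m \<ge> 1 \<Longrightarrow> real (n choose 2) / real (n div 2) > real (n - 1)"
proof -
  assume a: "n = 2*m+1" "m \<ge> 1"
  have ch: "n choose 2 = n * m" using a by (simp add: choose_two)
  have dv: "n div 2 = m" using a by simp
  have "real m \<noteq> 0" using a by simp
  then have "real n * real m / real m = real n" by simp
  then have "real (n * m) / real m = real n" by simp
  then show ?thesis using ch dv a by simp
qed

theorem mainTheorem6: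
  fixes G :: "('a, 'b) monoid_scheme" and p a :: nat
  assumes "group G" and "cyclic_group G" and "finite (carrier G)"
    and "prime p" and "odd p" and "a \<ge> 1"
    and "card (carrier G) = p ^ a"
  shows "overfull (carrier G) (power_adj G)"
proof -
  define V where "V = carrier G"
  define n where "n = card V"
  have adj: "power_adj G u v \<longleftrightarrow> u \<noteq> v" if uv: "u \<in> V" "v \<in> V" for u v
  proof
    assume "power_adj G u v" then show "u \<noteq> v" unfolding power_adj_def by (elim conjE)
  next
    assume "u \<noteq> v" then show "power_adj G u v"
      using complete_adj[OF assms(1,2,3,4,7), of u v] uv unfolding V_def by blast
  qed
  have fin: "finite V" using assms(3) V_def by simp
  have edges: "graph_edges V (power_adj G) = {B. B \<subseteq> V \<and> card B = 2}"
    using ed_lem[of V "power_adj G"] adj by blast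
  have ce: "card (graph_edges V (power_adj G)) = n choose 2"
    using edges n_def n_subsets[OF fin] by simp
  have deg: "\<And>v. v \<in> V \<Longrightarrow> graph_degree V (power_adj G) v = n - 1"
  proof -
    fix v assume v: "v \<in> V"
    have "{u \<in> V. power_adj G v u} = V - {v}" using adj v by auto
    then show "graph_degree V (power_adj G) v = n - 1"
      unfolding graph_degree_def using fin v n_def by simp
  qed
  have p3: "p \<ge> 3" using p3_lem assms(4,5) by blast
  have "p ^ 1 \<le> p ^ a" using assms(6) p3 by (intro power_increasing) auto
  then have n3: "n \<ge> 3" using p3 n_def V_def assms(7) by simp
  have nodd: "odd n" using n_def V_def assms(7) assms(5) by simp
  have Vne: "V \<noteq> {}" using n3 n_def by auto
  have md: "graph_max_degree V (power_adj G) = n - 1"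
    unfolding graph_max_degree_def using md_lem[OF fin Vne, of "graph_degree V (power_adj G)" "n - 1"] deg by blast
  obtain m where m: "n = 2 * m + 1" using nodd oddE by blast
  have m1: "m \<ge> 1" using m n3 by simp
  have "real (n choose 2) / real (n div 2) > real (n - 1)" using fin_lem m m1 by blast
  then show ?thesis
    unfolding overfull_def using ce md V_def n_def by simp
qed

end
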